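(* Let $X$ be a $T_1$ topological space. The following are equivalent: (i) $X$ is finite; (ii) every proper ideal of $C_c(X)_F$ (respectively of $C_c^*(X)_F$) is fixed; (iii) every maximal ideal of $C_c(X)_F$ (respectively of $C_c^*(X)_F$) is fixed; (iv) every $(\mathcal{Z}_c)_F$-filter on $X$ is fixed; (v) every $(\mathcal{Z}_c)_F$-ultrafilter on $X$ is fixed.
   Context: $C_c(X)_F$ denotes the set of all functions $f:X\to\mathbb{R}$ whose range $f(X)$ is countable and whose set of points of discontinuity is finite; $C_c^*(X)_F$ is its subring of bounded functions. $Z(f)=\{x:f(x)=0\}$ and $Z[C_c(X)_F]=\{Z(f):f\in C_c(X)_F\}$. An ideal $I$ is fixed if $\bigcap_{f\in I}Z(f)\neq\emptyset$. A $(\mathcal{Z}_c)_F$-filter on $X$ is a nonempty family $\mathcal{F}\subseteq Z[C_c(X)_F]$ with $\emptyset\notin\mathcal{F}$, closed under finite intersections, and such that $Z\in\mathcal{F}$, $Z'\in Z[C_c(X)_F]$, $Z\subseteq Z'$ imply $Z'\in\mathcal{F}$; a $(\mathcal{Z}_c)_F$-ultrafilter is a maximal $(\mathcal{Z}_c)_F$-filter. A filter $\mathcal{F}$ is fixed if $\bigcap\mathcal{F}\neq\emptyset$. *)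

theory Defs
  imports "HOL-Analysis.Analysis" "HOL-Algebra.Ideal"
begin

text \<open>Functions X \<rightarrow> R are represented as functions on the whole type that vanish
  outside the carrier topspace X (so that each function on X has exactly one representative).\<close>

definition continuous_at_pt :: "'a topology \<Rightarrow> ('a \<Rightarrow> real) \<Rightarrow> 'a \<Rightarrow> bool" where
  "continuous_at_pt X f x \<longleftrightarrow>
     (\<forall>V. open V \<and> f x \<in> V \<longrightarrow> (\<exists>U. openin X U \<and> x \<in> U \<and> f ` U \<subseteq> V))"

definition discont_set :: "'a topology \<Rightarrow> ('a \<Rightarrow> real) \<Rightarrow> 'a set" where
  "discont_set X f = {x \<in> topspace X. \<not> continuous_at_pt X f x}"

definition CcF :: "'a topology \<Rightarrow> ('a \<Rightarrow> real) set" where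
  "CcF X = {f. (\<forall>x. x \<notin> topspace X \<longrightarrow> f x = 0) \<and> countable (f ` topspace X)
               \<and> finite (discont_set X f)}"

definition CcF_bdd :: "'a topology \<Rightarrow> ('a \<Rightarrow> real) set" where
  "CcF_bdd X = {f \<in> CcF X. \<exists>M. \<forall>x \<in> topspace X. \<bar>f x\<bar> \<le> M}"

definition fun_ring :: "'a topology \<Rightarrow> ('a \<Rightarrow> real) set \<Rightarrow> ('a \<Rightarrow> real) ring" where
  "fun_ring X S = \<lparr> carrier = S,
      monoid.mult = (\<lambda>f g x. f x * g x),
      one = (\<lambda>x. if x \<in> topspace X then 1 else 0),
      zero = (\<lambda>x. 0),
      add = (\<lambda>f g x. f x + g x) \<rparr>"

definition Zset :: "'a topology \<Rightarrow> ('a \<Rightarrow> real) \<Rightarrow> 'a set" where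
  "Zset X f = {x \<in> topspace X. f x = 0}"

definition fixed_ideal :: "'a topology \<Rightarrow> ('a \<Rightarrow> real) set \<Rightarrow> bool" where
  "fixed_ideal X I \<longleftrightarrow> (\<Inter>f\<in>I. Zset X f) \<noteq> {}"

definition ZCcF :: "'a topology \<Rightarrow> 'a set set" where
  "ZCcF X = Zset X ` CcF X"

definition ZcF_filter :: "'a topology \<Rightarrow> 'a set set \<Rightarrow> bool" where
  "ZcF_filter X \<F> \<longleftrightarrow> \<F> \<noteq> {} \<and> \<F> \<subseteq> ZCcF X \<and> {} \<notin> \<F>
     \<and> (\<forall>A\<in>\<F>. \<forall>B\<in>\<F>. A \<inter> B \<in> \<F>)
     \<and> (\<forall>A\<in>\<F>. \<forall>B\<in>ZCcF X. A \<subseteq> B \<longrightarrow> B \<in> \<F>)"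

definition ZcF_ultrafilter :: "'a topology \<Rightarrow> 'a set set \<Rightarrow> bool" where
  "ZcF_ultrafilter X \<F> \<longleftrightarrow> ZcF_filter X \<F> \<and> (\<forall>\<G>. ZcF_filter X \<G> \<and> \<F> \<subseteq> \<G> \<longrightarrow> \<G> = \<F>)"

definition fixed_filter :: "'a set set \<Rightarrow> bool" where
  "fixed_filter \<F> \<longleftrightarrow> \<Inter>\<F> \<noteq> {}"

end

theory Submission
  imports Defs
begin


lemma cont_iff:
  assumes "x \<in> topspace X"
  shows "continuous_at_pt X f x \<longleftrightarrow> (f \<longlongrightarrow> f x) (nhdsin X x)"
  unfolding continuous_at_pt_def tendsto_def eventually_nhdsin image_subset_iff using assms by auto

lemma cont_add: "x \<in> topspace X \<Longrightarrow> continuous_at_pt X f x \<Longrightarrow> continuous_at_pt X g x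
   \<Longrightarrow> continuous_at_pt X (\<lambda>x. f x + g x) x"
  unfolding cont_iff by (rule tendsto_add)

lemma cont_mult: "x \<in> topspace X \<Longrightarrow> continuous_at_pt X f x \<Longrightarrow> continuous_at_pt X g x
   \<Longrightarrow> continuous_at_pt X (\<lambda>x. f x * g x) x"
  unfolding cont_iff by (rule tendsto_mult)

lemma cont_minus: "x \<in> topspace X \<Longrightarrow> continuous_at_pt X f x
   \<Longrightarrow> continuous_at_pt X (\<lambda>x. - f x) x"
  unfolding cont_iff by (rule tendsto_minus)

lemma discont_add: "discont_set X (\<lambda>x. f x + g x) \<subseteq> discont_set X f \<union> discont_set X g"
  unfolding discont_set_def using cont_add[of _ X f g] by blast

lemma discont_mult: "discont_set X (\<lambda>x. f x * g x) \<subseteq> discont_set X f \<union> discont_set X g"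
  unfolding discont_set_def using cont_mult[of _ X f g] by blast

lemma discont_minus: "discont_set X (\<lambda>x. - f x) \<subseteq> discont_set X f"
  unfolding discont_set_def using cont_minus[of _ X f] by blast

lemma discont_const_on: 
  assumes "\<And>x. x \<in> topspace X \<Longrightarrow> f x = c"
  shows "discont_set X f = {}"
proof -
  have "continuous_at_pt X f x" if "x \<in> topspace X" for x
    unfolding continuous_at_pt_def
  proof (intro allI impI)
    fix V assume "open V \<and> f x \<in> V"
    then show "\<exists>U. openin X U \<and> x \<in> U \<and> f ` U \<subseteq> V"
      using assms that by (intro exI[of _ "topspace X"]) auto
  qed
  then show ?thesis unfolding discont_set_def by auto
qed

definition FS :: "'a topology \<Rightarrow> ('a \<Rightarrow> real) set" where
  "FS X = {f. (\<forall>x. x \<notin> topspace X \<longrightarrow> f x = 0) \<and> finite {x. f x \<noteq> 0}}"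

lemma discont_FS:
  assumes "t1_space X" "f \<in> FS X"
  shows "discont_set X f \<subseteq> {x. f x \<noteq> 0}"
proof
  fix y assume y: "y \<in> discont_set X f"
  show "y \<in> {x. f x \<noteq> 0}"
  proof (rule ccontr)
    assume "y \<notin> {x. f x \<noteq> 0}"
    hence fy: "f y = 0" by simp
    let ?S = "{x. f x \<noteq> 0}"
    have "?S \<subseteq> topspace X" using assms(2) unfolding FS_def by auto
    moreover have "finite ?S" using assms(2) unfolding FS_def by auto
    ultimately have "closedin X ?S" using assms(1) t1_space_closedin_finite by blast
    hence o: "openin X (topspace X - ?S)" by auto
    have "continuous_at_pt X f y"
      unfolding continuous_at_pt_def
    proof (intro allI impI)
      fix V assume "open V \<and> f y \<in> V"
      then show "\<exists>U. openin X U \<and> y \<in> U \<and> f ` U \<subseteq> V"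
        using o fy y unfolding discont_set_def by (intro exI[of _ "topspace X - ?S"]) auto
    qed
    then show False using y unfolding discont_set_def by auto
  qed
qed

lemma FS_sub_bdd:
  assumes "t1_space X"
  shows "FS X \<subseteq> CcF_bdd X"
proof
  fix f assume f: "f \<in> FS X"
  let ?S = "{x. f x \<noteq> 0}"
  have fin: "finite ?S" using f unfolding FS_def by auto
  have "f ` topspace X \<subseteq> insert 0 (f ` ?S)" by auto
  hence fr: "finite (f ` topspace X)" using fin by (meson finite_imageI finite_insert finite_subset)
  have "finite (discont_set X f)" using discont_FS[OF assms f] fin finite_subset by blast
  moreover have "\<exists>M. \<forall>x \<in> topspace X. \<bar>f x\<bar> \<le> M"
    using fr by (intro exI[of _ "Max (abs ` f ` topspace X)"] ballI Max_ge) auto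
  ultimately show "f \<in> CcF_bdd X" using f fr unfolding CcF_bdd_def CcF_def FS_def
    by (auto intro: countable_finite)
qed

lemma bdd_sub: "CcF_bdd X \<subseteq> CcF X" unfolding CcF_bdd_def by auto

lemma CcF_add: "f \<in> CcF X \<Longrightarrow> g \<in> CcF X \<Longrightarrow> (\<lambda>x. f x + g x) \<in> CcF X"
proof -
  assume f: "f \<in> CcF X" and g: "g \<in> CcF X"
  have "(\<lambda>x. f x + g x) ` topspace X \<subseteq> (\<lambda>(a,b). a + b) ` (f ` topspace X \<times> g ` topspace X)" by auto
  moreover have "countable ((\<lambda>(a,b). a + b) ` (f ` topspace X \<times> g ` topspace X))"
    using f g unfolding CcF_def by auto
  ultimately have "countable ((\<lambda>x. f x + g x) ` topspace X)" by (rule countable_subset)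
  then show ?thesis using f g discont_add[of X f g] unfolding CcF_def
    by (auto intro: finite_subset)
qed

lemma CcF_mult: "f \<in> CcF X \<Longrightarrow> g \<in> CcF X \<Longrightarrow> (\<lambda>x. f x * g x) \<in> CcF X"
proof -
  assume f: "f \<in> CcF X" and g: "g \<in> CcF X"
  have "(\<lambda>x. f x * g x) ` topspace X \<subseteq> (\<lambda>(a,b). a * b) ` (f ` topspace X \<times> g ` topspace X)" by auto
  moreover have "countable ((\<lambda>(a,b). a * b) ` (f ` topspace X \<times> g ` topspace X))"
    using f g unfolding CcF_def by auto
  ultimately have "countable ((\<lambda>x. f x * g x) ` topspace X)" by (rule countable_subset)
  then show ?thesis using f g discont_mult[of X f g] unfolding CcF_def
    by (auto intro: finite_subset)
qed

lemma CcF_minus: "f \<in> CcF X \<Longrightarrow> (\<lambda>x. - f x) \<in> CcF X"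
proof -
  assume f: "f \<in> CcF X"
  have "(\<lambda>x. - f x) ` topspace X = uminus ` (f ` topspace X)" by auto
  then show ?thesis using f discont_minus[of X f] unfolding CcF_def
    by (auto intro: finite_subset)
qed

lemma CcF_const: "(\<lambda>x. if x \<in> topspace X then c else 0) \<in> CcF X"
proof -
  have "(\<lambda>x. if x \<in> topspace X then c else 0) ` topspace X \<subseteq> {c}" by auto
  then show ?thesis unfolding CcF_def
    using discont_const_on[of X "\<lambda>x. if x \<in> topspace X then c else 0" c]
    by (auto intro: countable_subset)
qed

lemma CcF_zero: "(\<lambda>x. 0) \<in> CcF X"
proof -
  have "(\<lambda>x. if x \<in> topspace X then (0::real) else 0) = (\<lambda>x. 0)" by simp
  then show ?thesis using CcF_const[of X 0] by metis
qed

lemma bdd_in: "f \<in> CcF_bdd X \<Longrightarrow> f \<in> CcF X"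
  unfolding CcF_bdd_def by simp

lemma bddE: "f \<in> CcF_bdd X \<Longrightarrow> \<exists>M. \<forall>x\<in>topspace X. \<bar>f x\<bar> \<le> M"
  unfolding CcF_bdd_def by simp

lemma bddI: "f \<in> CcF X \<Longrightarrow> \<forall>x\<in>topspace X. \<bar>f x\<bar> \<le> M \<Longrightarrow> f \<in> CcF_bdd X"
  unfolding CcF_bdd_def by blast

lemma bdd_add: "f \<in> CcF_bdd X \<Longrightarrow> g \<in> CcF_bdd X \<Longrightarrow> (\<lambda>x. f x + g x) \<in> CcF_bdd X"
proof -
  assume f: "f \<in> CcF_bdd X" and g: "g \<in> CcF_bdd X"
  obtain M where M: "\<forall>x\<in>topspace X. \<bar>f x\<bar> \<le> M" using bddE[OF f] by blast
  obtain N where N: "\<forall>x\<in>topspace X. \<bar>g x\<bar> \<le> N" using bddE[OF g] by blast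
  have B: "\<forall>x\<in>topspace X. \<bar>f x + g x\<bar> \<le> M + N" 
  proof
    fix x assume "x \<in> topspace X"
    then have "\<bar>f x\<bar> \<le> M" "\<bar>g x\<bar> \<le> N" using M N by auto
    then show "\<bar>f x + g x\<bar> \<le> M + N" using abs_triangle_ineq[of "f x" "g x"] by linarith
  qed
  have C: "(\<lambda>x. f x + g x) \<in> CcF X" by (intro CcF_add bdd_in f g)
  have "\<exists>K. \<forall>x\<in>topspace X. \<bar>(\<lambda>x. f x + g x) x\<bar> \<le> K" using B by (intro exI[of _ "M + N"]) simp
  then show ?thesis using C unfolding CcF_bdd_def by simp
qed

lemma bdd_mult: "f \<in> CcF_bdd X \<Longrightarrow> g \<in> CcF_bdd X \<Longrightarrow> (\<lambda>x. f x * g x) \<in> CcF_bdd X"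
proof -
  assume f: "f \<in> CcF_bdd X" and g: "g \<in> CcF_bdd X"
  obtain M where M: "\<forall>x\<in>topspace X. \<bar>f x\<bar> \<le> M" using bddE[OF f] by blast
  obtain N where N: "\<forall>x\<in>topspace X. \<bar>g x\<bar> \<le> N" using bddE[OF g] by blast
  have B: "\<forall>x\<in>topspace X. \<bar>f x * g x\<bar> \<le> M * N"
  proof
    fix x assume "x \<in> topspace X"
    then have a: "\<bar>f x\<bar> \<le> M" "\<bar>g x\<bar> \<le> N" using M N by auto
    then show "\<bar>f x * g x\<bar> \<le> M * N" unfolding abs_mult
      by (intro mult_mono) auto
  qed
  have C: "(\<lambda>x. f x * g x) \<in> CcF X" by (intro CcF_mult bdd_in f g)
  have "\<exists>K. \<forall>x\<in>topspace X. \<bar>(\<lambda>x. f x * g x) x\<bar> \<le> K" using B by (intro exI[of _ "M * N"]) simp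
  then show ?thesis using C unfolding CcF_bdd_def by simp
qed

lemma bdd_minus: "f \<in> CcF_bdd X \<Longrightarrow> (\<lambda>x. - f x) \<in> CcF_bdd X"
proof -
  assume f: "f \<in> CcF_bdd X"
  obtain M where M: "\<forall>x\<in>topspace X. \<bar>f x\<bar> \<le> M" using bddE[OF f] by blast
  have C: "(\<lambda>x. - f x) \<in> CcF X" by (intro CcF_minus bdd_in f)
  have "\<exists>K. \<forall>x\<in>topspace X. \<bar>(\<lambda>x. - f x) x\<bar> \<le> K" using M by (intro exI[of _ "M"]) simp
  then show ?thesis using C unfolding CcF_bdd_def by simp
qed

lemma bdd_const: "(\<lambda>x. if x \<in> topspace X then c else 0) \<in> CcF_bdd X"
  using CcF_const[of X c] unfolding CcF_bdd_def by (auto intro!: exI[of _ "\<bar>c\<bar>"])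

lemma fun_ring_simps [simp]:
  "carrier (fun_ring X S) = S"
  "mult (fun_ring X S) = (\<lambda>f g x. f x * g x)"
  "one (fun_ring X S) = (\<lambda>x. if x \<in> topspace X then 1 else 0)"
  "zero (fun_ring X S) = (\<lambda>x. 0)"
  "add (fun_ring X S) = (\<lambda>f g x. f x + g x)"
  by (simp_all add: fun_ring_def)

lemma ring_fun:
  assumes van: "\<And>f x. f \<in> S \<Longrightarrow> x \<notin> topspace X \<Longrightarrow> f x = 0"
    and add: "\<And>f g. f \<in> S \<Longrightarrow> g \<in> S \<Longrightarrow> (\<lambda>x. f x + g x) \<in> S"
    and mul: "\<And>f g. f \<in> S \<Longrightarrow> g \<in> S \<Longrightarrow> (\<lambda>x. f x * g x) \<in> S"
    and neg: "\<And>f. f \<in> S \<Longrightarrow> (\<lambda>x. - f x) \<in> S"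
    and z: "(\<lambda>x. 0) \<in> S"
    and o: "(\<lambda>x. if x \<in> topspace X then 1 else 0) \<in> S"
  shows "ring (fun_ring X S)"
proof (rule ringI)
  show "abelian_group (fun_ring X S)"
  proof (rule abelian_groupI)
    fix x assume "x \<in> carrier (fun_ring X S)"
    then show "\<exists>y\<in>carrier (fun_ring X S). y \<oplus>\<^bsub>fun_ring X S\<^esub> x = \<zero>\<^bsub>fun_ring X S\<^esub>"
      using neg by (intro bexI[of _ "\<lambda>y. - x y"]) auto
  qed (auto simp: add z algebra_simps)
  show "monoid (fun_ring X S)"
  proof (rule monoidI)
    fix x assume "x \<in> carrier (fun_ring X S)"
    then show "\<one>\<^bsub>fun_ring X S\<^esub> \<otimes>\<^bsub>fun_ring X S\<^esub> x = x"
      "x \<otimes>\<^bsub>fun_ring X S\<^esub> \<one>\<^bsub>fun_ring X S\<^esub> = x"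
      using van by (auto simp: fun_eq_iff)
  qed (auto simp: mul o algebra_simps)
qed (auto simp: algebra_simps)

lemma ring_CcF: "ring (fun_ring X (CcF X))"
  by (rule ring_fun) (auto simp: CcF_add CcF_mult CcF_minus CcF_zero CcF_const[of X 1, simplified] ,
     auto simp: CcF_def)

lemma bdd_zero: "(\<lambda>x. 0) \<in> CcF_bdd X"
  using CcF_zero[of X] unfolding CcF_bdd_def by auto

lemma ring_bdd: "ring (fun_ring X (CcF_bdd X))"
proof (rule ring_fun)
  show "f x = 0" if "f \<in> CcF_bdd X" "x \<notin> topspace X" for f x
    using bdd_in[OF that(1)] that(2) unfolding CcF_def by simp
  show "(\<lambda>x. if x \<in> topspace X then 1 else 0) \<in> CcF_bdd X" by (rule bdd_const)
qed (auto simp: bdd_add bdd_mult bdd_minus bdd_zero)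




definition delta :: "'a \<Rightarrow> 'a \<Rightarrow> real" where
  "delta a = (\<lambda>y. if y = a then 1 else 0)"

lemma delta_FS: "a \<in> topspace X \<Longrightarrow> delta a \<in> FS X"
  unfolding FS_def delta_def by auto

lemma zero_FS: "(\<lambda>x. 0) \<in> FS X"
  unfolding FS_def by auto

lemma FS_add: "f \<in> FS X \<Longrightarrow> g \<in> FS X \<Longrightarrow> (\<lambda>x. f x + g x) \<in> FS X"
proof -
  assume f: "f \<in> FS X" and g: "g \<in> FS X"
  have "{x. f x + g x \<noteq> 0} \<subseteq> {x. f x \<noteq> 0} \<union> {x. g x \<noteq> 0}" by auto
  then show ?thesis using f g unfolding FS_def by (auto intro: finite_subset)
qed

lemma FS_mult: "f \<in> FS X \<Longrightarrow> (\<lambda>x. g x * f x) \<in> FS X"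
proof -
  assume f: "f \<in> FS X"
  have "{x. g x * f x \<noteq> 0} \<subseteq> {x. f x \<noteq> 0}" by auto
  then show ?thesis using f unfolding FS_def by (auto intro: finite_subset)
qed

lemma FS_mult2: "f \<in> FS X \<Longrightarrow> (\<lambda>x. f x * g x) \<in> FS X"
  using FS_mult[of f X g] by (simp add: mult.commute)

lemma FS_minus: "f \<in> FS X \<Longrightarrow> (\<lambda>x. - f x) \<in> FS X"
  unfolding FS_def by auto

lemma add_inv_fun:
  assumes "ring (fun_ring X S)" "a \<in> S" "(\<lambda>x. - a x) \<in> S"
  shows "\<ominus>\<^bsub>fun_ring X S\<^esub> a = (\<lambda>x. - a x)"
proof (rule abelian_group.minus_equality[OF ring.is_abelian_group[OF assms(1)]])
  show "(\<lambda>x. - a x) \<oplus>\<^bsub>fun_ring X S\<^esub> a = \<zero>\<^bsub>fun_ring X S\<^esub>" by simp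
qed (use assms in simp_all)

lemma FS_ideal:
  assumes R: "ring (fun_ring X S)" and sub: "FS X \<subseteq> S"
  shows "ideal (FS X) (fun_ring X S)"
proof (rule idealI[OF R])
  show "subgroup (FS X) (add_monoid (fun_ring X S))"
  proof (rule group.subgroupI[OF abelian_group.a_group[OF ring.is_abelian_group[OF R]]])
    show "FS X \<subseteq> carrier (add_monoid (fun_ring X S))" using sub by simp
    show "FS X \<noteq> {}" using zero_FS by blast
    fix a assume a: "a \<in> FS X"
    then have "\<ominus>\<^bsub>fun_ring X S\<^esub> a = (\<lambda>x. - a x)"
      using add_inv_fun[OF R, of a] sub FS_minus[OF a] a by (simp add: subset_iff)
    then have e: "inv\<^bsub>add_monoid (fun_ring X S)\<^esub> a = (\<lambda>x. - a x)" unfolding a_inv_def .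
    show "inv\<^bsub>add_monoid (fun_ring X S)\<^esub> a \<in> FS X" unfolding e by (rule FS_minus[OF a])
    fix b assume b: "b \<in> FS X"
    show "a \<otimes>\<^bsub>add_monoid (fun_ring X S)\<^esub> b \<in> FS X" using FS_add[OF a b] by simp
  qed
  show "x \<otimes>\<^bsub>fun_ring X S\<^esub> a \<in> FS X" if "a \<in> FS X" "x \<in> carrier (fun_ring X S)" for a x
    using FS_mult[OF that(1)] by simp
  show "a \<otimes>\<^bsub>fun_ring X S\<^esub> x \<in> FS X" if "a \<in> FS X" "x \<in> carrier (fun_ring X S)" for a x
    using FS_mult2[OF that(1)] by simp
qed

lemma one_notin_FS:
  assumes "infinite (topspace X)"
  shows "(\<lambda>x. if x \<in> topspace X then 1 else 0) \<notin> FS X"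
proof
  assume "(\<lambda>x. if x \<in> topspace X then 1 else 0) \<in> FS X"
  then have "finite {x. (if x \<in> topspace X then 1 else 0::real) \<noteq> 0}" unfolding FS_def by simp
  moreover have "{x. (if x \<in> topspace X then 1 else 0::real) \<noteq> 0} = topspace X" by auto
  ultimately show False using assms by simp
qed

lemma nonfixed:
  assumes "FS X \<subseteq> I"
  shows "\<not> fixed_ideal X I"
proof
  assume "fixed_ideal X I"
  then obtain y where y: "y \<in> (\<Inter>f\<in>I. Zset X f)" unfolding fixed_ideal_def by blast
  have "(\<lambda>x. 0) \<in> I" by (rule subsetD[OF assms zero_FS])
  then have "y \<in> Zset X (\<lambda>x. 0)" by (rule INT_D[OF y])
  then have yt: "y \<in> topspace X" unfolding Zset_def by simp
  then have "delta y \<in> I" by (rule subsetD[OF assms delta_FS])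
  then have "y \<in> Zset X (delta y)" by (rule INT_D[OF y])
  then show False unfolding Zset_def delta_def by simp
qed

lemma chain_ideal_union:
  assumes R: "ring R" and C: "C \<noteq> {}" "\<And>J. J \<in> C \<Longrightarrow> ideal J R"
    and ch: "\<And>J K. J \<in> C \<Longrightarrow> K \<in> C \<Longrightarrow> J \<subseteq> K \<or> K \<subseteq> J"
  shows "ideal (\<Union>C) R"
proof (rule idealI[OF R])
  show "subgroup (\<Union>C) (add_monoid R)"
  proof (rule group.subgroupI[OF abelian_group.a_group[OF ring.is_abelian_group[OF R]]])
    show "\<Union>C \<subseteq> carrier (add_monoid R)"
      using C(2) additive_subgroup.a_subset[OF ideal.axioms(1)] by fastforce
    show "\<Union>C \<noteq> {}" using C additive_subgroup.zero_closed[OF ideal.axioms(1)] by blast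
    fix a assume "a \<in> \<Union>C"
    then obtain J where J: "J \<in> C" "a \<in> J" by blast
    have "\<ominus>\<^bsub>R\<^esub> a \<in> J"
      using additive_subgroup.a_inv_closed[OF ideal.axioms(1)[OF C(2)[OF J(1)]] J(2)] .
    then have "inv\<^bsub>add_monoid R\<^esub> a \<in> J" unfolding a_inv_def .
    then show "inv\<^bsub>add_monoid R\<^esub> a \<in> \<Union>C" using J by blast
    fix b assume "b \<in> \<Union>C"
    then obtain K where K: "K \<in> C" "b \<in> K" by blast
    have "a \<oplus>\<^bsub>R\<^esub> b \<in> \<Union>C"
    proof (cases "J \<subseteq> K")
      case True
      then show ?thesis using additive_subgroup.a_closed[OF ideal.axioms(1)[OF C(2)[OF K(1)]], of a b] J K by blast
    next
      case False
      then have "K \<subseteq> J" using ch J K by blast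
      then show ?thesis using additive_subgroup.a_closed[OF ideal.axioms(1)[OF C(2)[OF J(1)]], of a b] J K by blast
    qed
    then show "a \<otimes>\<^bsub>add_monoid R\<^esub> b \<in> \<Union>C" by simp
  qed
  show "x \<otimes>\<^bsub>R\<^esub> a \<in> \<Union>C" if aC: "a \<in> \<Union>C" and xc: "x \<in> carrier R" for a x
  proof -
    obtain J where J: "J \<in> C" "a \<in> J" using aC by blast
    have "x \<otimes>\<^bsub>R\<^esub> a \<in> J" by (rule ideal.I_l_closed[OF C(2)[OF J(1)] J(2) xc])
    then show ?thesis using J(1) by blast
  qed
  show "a \<otimes>\<^bsub>R\<^esub> x \<in> \<Union>C" if aC: "a \<in> \<Union>C" and xc: "x \<in> carrier R" for a x
  proof -
    obtain J where J: "J \<in> C" "a \<in> J" using aC by blast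
    have "a \<otimes>\<^bsub>R\<^esub> x \<in> J" by (rule ideal.I_r_closed[OF C(2)[OF J(1)] J(2) xc])
    then show ?thesis using J(1) by blast
  qed
qed

lemma krull:
  assumes R: "ring R" and I: "ideal I R" "I \<noteq> carrier R"
  shows "\<exists>M. maximalideal M R \<and> I \<subseteq> M"
proof -
  define A where "A = {J. ideal J R \<and> I \<subseteq> J \<and> \<one>\<^bsub>R\<^esub> \<notin> J}"
  have "\<one>\<^bsub>R\<^esub> \<notin> I" using I ideal.one_imp_carrier by blast
  then have "I \<in> A" using I unfolding A_def by blast
  then have "A \<noteq> {}" by blast
  have "\<exists>M\<in>A. \<forall>X\<in>A. M \<subseteq> X \<longrightarrow> X = M"
  proof (rule subset_Zorn_nonempty[OF \<open>A \<noteq> {}\<close>])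
    fix C assume C: "C \<noteq> {}" "subset.chain A C"
    have "ideal (\<Union>C) R"
      by (rule chain_ideal_union[OF R C(1)]) (use C(2) in \<open>auto simp: A_def subset.chain_def\<close>)
    moreover have "I \<subseteq> \<Union>C" using C unfolding A_def subset.chain_def by blast
    moreover have "\<one>\<^bsub>R\<^esub> \<notin> \<Union>C" using C unfolding A_def subset.chain_def by blast
    ultimately show "\<Union>C \<in> A" unfolding A_def by blast
  qed
  then obtain M where M: "M \<in> A" and mx: "\<forall>X\<in>A. M \<subseteq> X \<longrightarrow> X = M" by blast
  have "maximalideal M R"
  proof (rule maximalidealI)
    show "ideal M R" using M unfolding A_def by blast
    have "\<one>\<^bsub>R\<^esub> \<in> carrier R" using R by (simp add: ring.ring_simprules)
    then show "carrier R \<noteq> M" using M unfolding A_def by blast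
    fix J assume J: "ideal J R" "M \<subseteq> J" "J \<subseteq> carrier R"
    show "J = M \<or> J = carrier R"
    proof (cases "\<one>\<^bsub>R\<^esub> \<in> J")
      case True then show ?thesis using J ideal.one_imp_carrier by blast
    next
      case False then have "J \<in> A" using J M unfolding A_def by blast
      then show ?thesis using mx J by blast
    qed
  qed
  then show ?thesis using M unfolding A_def by blast
qed




lemma fin_fixed:
  assumes fin: "finite (topspace X)" and R: "ring (fun_ring X S)"
    and Sall: "\<And>f. (\<forall>x. x \<notin> topspace X \<longrightarrow> f x = 0) \<Longrightarrow> f \<in> S"
    and I: "ideal I (fun_ring X S)" and IS: "I \<noteq> S"
  shows "fixed_ideal X I"
proof (rule ccontr)
  assume nf: "\<not> fixed_ideal X I"
  have ex: "\<exists>f\<in>I. f x \<noteq> 0" if x: "x \<in> topspace X" for x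
  proof -
    have "x \<notin> (\<Inter>f\<in>I. Zset X f)" using nf unfolding fixed_ideal_def by blast
    then obtain f where "f \<in> I" "x \<notin> Zset X f" by blast
    then show ?thesis using x unfolding Zset_def by blast
  qed
  have Ic: "I \<subseteq> S" using additive_subgroup.a_subset[OF ideal.axioms(1)[OF I]] by simp
  have z: "(\<lambda>x. 0) \<in> I" using additive_subgroup.zero_closed[OF ideal.axioms(1)[OF I]] by simp
  have addI: "(\<lambda>x. f x + g x) \<in> I" if "f \<in> I" "g \<in> I" for f g
    using additive_subgroup.a_closed[OF ideal.axioms(1)[OF I] that] by simp
  have mulI: "(\<lambda>x. h x * f x) \<in> I" if "f \<in> I" "h \<in> S" for f h
    using ideal.I_l_closed[OF I that(1), of h] that(2) by simp
  have main: "A \<subseteq> topspace X \<Longrightarrow> \<exists>g\<in>I. (\<forall>x. 0 \<le> g x) \<and> (\<forall>x\<in>A. 0 < g x)" if "finite A" for A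
    using that
  proof (induction A rule: finite_induct)
    case empty
    then show ?case using z by auto
  next
    case (insert a A)
    have At: "A \<subseteq> topspace X" "a \<in> topspace X" using insert.prems by auto
    obtain g where g: "g \<in> I" "\<forall>x. 0 \<le> g x" "\<forall>x\<in>A. 0 < g x" using insert.IH[OF At(1)] by blast
    obtain f where f: "f \<in> I" "f a \<noteq> 0" using ex[OF At(2)] by blast
    have "(\<lambda>x. f x * f x) \<in> I" by (rule mulI[OF f(1) subsetD[OF Ic f(1)]])
    then have P1: "(\<lambda>x. g x + f x * f x) \<in> I" by (rule addI[OF g(1)])
    have P2: "\<forall>x. 0 \<le> g x + f x * f x" using g(2) by (simp add: add_nonneg_nonneg)
    have P3: "\<forall>x\<in>insert a A. 0 < g x + f x * f x"
    proof
      fix x assume "x \<in> insert a A"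
      then show "0 < g x + f x * f x"
      proof
        assume "x = a"
        have "0 < f a * f a" using f(2) not_real_square_gt_zero by blast
        then show ?thesis using g(2) \<open>x = a\<close> by (metis add_nonneg_pos)
      next
        assume "x \<in> A"
        then have "0 < g x" using g(3) by blast
        moreover have "0 \<le> f x * f x" by simp
        ultimately show ?thesis by linarith
      qed
    qed
    show ?case by (rule bexI[OF _ P1]) (intro conjI P2 P3)
  qed
  obtain g where g: "g \<in> I" "\<forall>x\<in>topspace X. 0 < g x" using main[OF fin] by blast
  define h where "h = (\<lambda>x. if x \<in> topspace X then 1 / g x else 0)"
  have "h \<in> S" unfolding h_def by (rule Sall) simp
  then have "(\<lambda>x. h x * g x) \<in> I" by (rule mulI[OF g(1)])
  moreover have "(\<lambda>x. h x * g x) = \<one>\<^bsub>fun_ring X S\<^esub>"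
    using g(2) unfolding h_def by (auto simp: fun_eq_iff)
  ultimately have "\<one>\<^bsub>fun_ring X S\<^esub> \<in> I" by simp
  then have "I = carrier (fun_ring X S)" by (rule ideal.one_imp_carrier[OF I])
  then show False using IS by simp
qed

lemma CcF_fin:
  assumes "finite (topspace X)" "\<forall>x. x \<notin> topspace X \<longrightarrow> f x = 0"
  shows "f \<in> CcF_bdd X"
proof -
  have fr: "finite (f ` topspace X)" using assms(1) by simp
  have "discont_set X f \<subseteq> topspace X" unfolding discont_set_def by auto
  then have "finite (discont_set X f)" using assms(1) finite_subset by blast
  then have c: "f \<in> CcF X" unfolding CcF_def using assms(2) fr countable_finite by blast
  have "\<exists>M. \<forall>x \<in> topspace X. \<bar>f x\<bar> \<le> M"
    using fr by (intro exI[of _ "Max (abs ` f ` topspace X)"] ballI Max_ge) auto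
  then show ?thesis using c unfolding CcF_bdd_def by blast
qed

lemma Zset_sub: "Zset X f \<subseteq> topspace X" unfolding Zset_def by auto

lemma ZCcF_inter:
  assumes "A \<in> ZCcF X" "B \<in> ZCcF X"
  shows "A \<inter> B \<in> ZCcF X"
proof -
  obtain f where f: "f \<in> CcF X" "A = Zset X f" using assms(1) unfolding ZCcF_def by blast
  obtain g where g: "g \<in> CcF X" "B = Zset X g" using assms(2) unfolding ZCcF_def by blast
  have h: "(\<lambda>x. f x * f x + g x * g x) \<in> CcF X"
    by (rule CcF_add[OF CcF_mult[OF f(1) f(1)] CcF_mult[OF g(1) g(1)]])
  have "A \<inter> B = Zset X (\<lambda>x. f x * f x + g x * g x)"
    unfolding f g Zset_def by (auto simp: sum_squares_eq_zero_iff)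
  then show ?thesis unfolding ZCcF_def by (rule image_eqI[OF _ h])
qed

lemma ZCcF_sub: "A \<in> ZCcF X \<Longrightarrow> A \<subseteq> topspace X"
  unfolding ZCcF_def Zset_def by auto

lemma fin_Inter:
  assumes "finite G" "G \<noteq> {}" "G \<subseteq> F" "\<forall>A\<in>F. \<forall>B\<in>F. A \<inter> B \<in> F"
  shows "\<Inter>G \<in> F"
  using assms(1,2,3)
proof (induction G rule: finite_ne_induct)
  case (singleton x) then show ?case by simp
next
  case (insert x G) then show ?case using assms(4) by simp
qed

lemma filter_int: "ZcF_filter X G \<Longrightarrow> A \<in> G \<Longrightarrow> B \<in> G \<Longrightarrow> A \<inter> B \<in> G"
  unfolding ZcF_filter_def by blast
lemma filter_up: "ZcF_filter X G \<Longrightarrow> A \<in> G \<Longrightarrow> B \<in> ZCcF X \<Longrightarrow> A \<subseteq> B \<Longrightarrow> B \<in> G"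
  unfolding ZcF_filter_def by blast
lemma filter_sub: "ZcF_filter X G \<Longrightarrow> G \<subseteq> ZCcF X"
  unfolding ZcF_filter_def by blast
lemma filter_ne: "ZcF_filter X G \<Longrightarrow> G \<noteq> {}"
  unfolding ZcF_filter_def by blast
lemma filter_em: "ZcF_filter X G \<Longrightarrow> {} \<notin> G"
  unfolding ZcF_filter_def by blast

lemma fin_filter:
  assumes fin: "finite (topspace X)" and F: "ZcF_filter X F"
  shows "fixed_filter F"
proof -
  have sub: "F \<subseteq> Pow (topspace X)"
  proof
    fix A assume "A \<in> F"
    then have "A \<in> ZCcF X" using filter_sub[OF F] by blast
    then show "A \<in> Pow (topspace X)" using ZCcF_sub by blast
  qed
  have "finite F" using finite_subset[OF sub] fin by simp
  moreover have "\<forall>A\<in>F. \<forall>B\<in>F. A \<inter> B \<in> F" using filter_int[OF F] by blast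
  ultimately have "\<Inter>F \<in> F" using fin_Inter[OF _ filter_ne[OF F] subset_refl] by blast
  then show ?thesis using filter_em[OF F] unfolding fixed_filter_def by metis
qed

lemma top_Z: "topspace X \<in> ZCcF X"
proof -
  have "topspace X = Zset X (\<lambda>x. 0)" unfolding Zset_def by simp
  then show ?thesis unfolding ZCcF_def by (rule image_eqI[OF _ CcF_zero])
qed

lemma del_Z:
  assumes "t1_space X" "y \<in> topspace X"
  shows "topspace X - {y} \<in> ZCcF X"
proof -
  have d: "delta y \<in> CcF X" using delta_FS[OF assms(2)] FS_sub_bdd[OF assms(1)] bdd_sub by blast
  have "topspace X - {y} = Zset X (delta y)" unfolding Zset_def delta_def by auto
  then show ?thesis unfolding ZCcF_def by (rule image_eqI[OF _ d])
qed

definition F0 :: "'a topology \<Rightarrow> 'a set set" where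
  "F0 X = {Z \<in> ZCcF X. finite (topspace X - Z)}"

lemma F0_filter:
  assumes "infinite (topspace X)"
  shows "ZcF_filter X (F0 X)"
  unfolding ZcF_filter_def
proof (intro conjI ballI impI)
  show "F0 X \<noteq> {}" using top_Z unfolding F0_def by fastforce
  show "F0 X \<subseteq> ZCcF X" unfolding F0_def by blast
  show "{} \<notin> F0 X" using assms unfolding F0_def by simp
  fix A assume A: "A \<in> F0 X"
  { fix B assume B: "B \<in> F0 X"
    have "topspace X - A \<inter> B = (topspace X - A) \<union> (topspace X - B)" by blast
    then show "A \<inter> B \<in> F0 X" using A B ZCcF_inter unfolding F0_def by auto }
  { fix B assume B: "B \<in> ZCcF X" "A \<subseteq> B"
    have "topspace X - B \<subseteq> topspace X - A" using B by blast
    then show "B \<in> F0 X" using A B finite_subset unfolding F0_def by blast }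
qed

lemma F0_Inter:
  assumes "t1_space X" "\<F> \<supseteq> F0 X"
  shows "\<Inter>\<F> = {}"
proof -
  { fix y assume y: "y \<in> \<Inter>\<F>"
    have "topspace X \<in> F0 X" using top_Z unfolding F0_def by simp
    then have yt: "y \<in> topspace X" using y assms(2) by blast
    have "topspace X - (topspace X - {y}) = {y}" using yt by blast
    then have "topspace X - {y} \<in> F0 X" using del_Z[OF assms(1) yt] unfolding F0_def by simp
    then have False using y assms(2) by blast }
  then show ?thesis by blast
qed

lemma ultra_exists:
  assumes "ZcF_filter X F"
  shows "\<exists>U. ZcF_ultrafilter X U \<and> F \<subseteq> U"
proof -
  define A where "A = {G. ZcF_filter X G \<and> F \<subseteq> G}"
  have "F \<in> A" using assms unfolding A_def by blast
  then have "A \<noteq> {}" by blast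
  have "\<exists>M\<in>A. \<forall>X\<in>A. M \<subseteq> X \<longrightarrow> X = M"
  proof (rule subset_Zorn_nonempty[OF \<open>A \<noteq> {}\<close>])
    fix C assume C: "C \<noteq> {}" "subset.chain A C"
    have CA: "\<And>G. G \<in> C \<Longrightarrow> ZcF_filter X G \<and> F \<subseteq> G" using C(2) unfolding A_def subset.chain_def by blast
    have ch: "\<And>G H. G \<in> C \<Longrightarrow> H \<in> C \<Longrightarrow> G \<subseteq> H \<or> H \<subseteq> G" using C(2) unfolding subset.chain_def by blast
    have "ZcF_filter X (\<Union>C)"
      unfolding ZcF_filter_def
    proof (intro conjI ballI impI)
      obtain G where G: "G \<in> C" using C(1) by blast
      then show "\<Union>C \<noteq> {}" using filter_ne CA[OF G] by blast
      show "\<Union>C \<subseteq> ZCcF X" using CA filter_sub by blast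
      show "{} \<notin> \<Union>C" using CA filter_em by blast
      fix P assume "P \<in> \<Union>C"
      then obtain G where G: "G \<in> C" "P \<in> G" by blast
      { fix Q assume "Q \<in> \<Union>C"
        then obtain H where H: "H \<in> C" "Q \<in> H" by blast
        show "P \<inter> Q \<in> \<Union>C"
        proof (cases "G \<subseteq> H")
          case True
          then have "P \<in> H" using G by blast
          then have "P \<inter> Q \<in> H" using filter_int CA[OF H(1)] H(2) by blast
          then show ?thesis using H(1) by blast
        next
          case False
          then have "H \<subseteq> G" using ch G H by blast
          then have "Q \<in> G" using H by blast
          then have "P \<inter> Q \<in> G" using filter_int CA[OF G(1)] G(2) by blast
          then show ?thesis using G(1) by blast
        qed }
      { fix Q assume "Q \<in> ZCcF X" "P \<subseteq> Q"
        then have "Q \<in> G" using filter_up CA[OF G(1)] G(2) by blast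
        then show "Q \<in> \<Union>C" using G(1) by blast }
    qed
    moreover have "F \<subseteq> \<Union>C" using C(1) CA by blast
    ultimately show "\<Union>C \<in> A" unfolding A_def by blast
  qed
  then obtain M where M: "M \<in> A" and mx: "\<forall>X\<in>A. M \<subseteq> X \<longrightarrow> X = M" by blast
  have "ZcF_ultrafilter X M"
    unfolding ZcF_ultrafilter_def
  proof (intro conjI allI impI)
    show "ZcF_filter X M" using M unfolding A_def by blast
    fix G assume "ZcF_filter X G \<and> M \<subseteq> G"
    then have "G \<in> A" using M unfolding A_def by blast
    then show "G = M" using mx \<open>ZcF_filter X G \<and> M \<subseteq> G\<close> by blast
  qed
  then show ?thesis using M unfolding A_def by blast
qed




theorem theorem3p13:
  fixes X :: "'a topology"
  assumes "t1_space X"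
  shows "(finite (topspace X) \<longleftrightarrow>
            (\<forall>I. ideal I (fun_ring X (CcF X)) \<and> I \<noteq> CcF X \<longrightarrow> fixed_ideal X I))
       \<and> (finite (topspace X) \<longleftrightarrow>
            (\<forall>I. ideal I (fun_ring X (CcF_bdd X)) \<and> I \<noteq> CcF_bdd X \<longrightarrow> fixed_ideal X I))
       \<and> (finite (topspace X) \<longleftrightarrow>
            (\<forall>I. maximalideal I (fun_ring X (CcF X)) \<longrightarrow> fixed_ideal X I))
       \<and> (finite (topspace X) \<longleftrightarrow>
            (\<forall>I. maximalideal I (fun_ring X (CcF_bdd X)) \<longrightarrow> fixed_ideal X I))
       \<and> (finite (topspace X) \<longleftrightarrow> (\<forall>\<F>. ZcF_filter X \<F> \<longrightarrow> fixed_filter \<F>))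
       \<and> (finite (topspace X) \<longleftrightarrow> (\<forall>\<F>. ZcF_ultrafilter X \<F> \<longrightarrow> fixed_filter \<F>))"
proof (cases "finite (topspace X)")
  case True
  have A1: "f \<in> CcF X" if "\<forall>x. x \<notin> topspace X \<longrightarrow> f x = 0" for f
    by (rule bdd_in[OF CcF_fin[OF True that]])
  have A2: "f \<in> CcF_bdd X" if "\<forall>x. x \<notin> topspace X \<longrightarrow> f x = 0" for f
    by (rule CcF_fin[OF True that])
  have i1: "\<forall>I. ideal I (fun_ring X (CcF X)) \<and> I \<noteq> CcF X \<longrightarrow> fixed_ideal X I"
  proof (intro allI impI)
    fix I assume "ideal I (fun_ring X (CcF X)) \<and> I \<noteq> CcF X"
    then show "fixed_ideal X I" using fin_fixed[OF True ring_CcF A1] by blast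
  qed
  have i2: "\<forall>I. ideal I (fun_ring X (CcF_bdd X)) \<and> I \<noteq> CcF_bdd X \<longrightarrow> fixed_ideal X I"
  proof (intro allI impI)
    fix I assume "ideal I (fun_ring X (CcF_bdd X)) \<and> I \<noteq> CcF_bdd X"
    then show "fixed_ideal X I" using fin_fixed[OF True ring_bdd A2] by blast
  qed
  have m1: "\<forall>I. maximalideal I (fun_ring X (CcF X)) \<longrightarrow> fixed_ideal X I"
  proof (intro allI impI)
    fix I assume M: "maximalideal I (fun_ring X (CcF X))"
    have "ideal I (fun_ring X (CcF X))" using maximalideal.axioms(1)[OF M] .
    moreover have "I \<noteq> CcF X" using maximalideal.I_notcarr[OF M] by simp
    ultimately show "fixed_ideal X I" using i1 by blast
  qed
  have m2: "\<forall>I. maximalideal I (fun_ring X (CcF_bdd X)) \<longrightarrow> fixed_ideal X I"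
  proof (intro allI impI)
    fix I assume M: "maximalideal I (fun_ring X (CcF_bdd X))"
    have "ideal I (fun_ring X (CcF_bdd X))" using maximalideal.axioms(1)[OF M] .
    moreover have "I \<noteq> CcF_bdd X" using maximalideal.I_notcarr[OF M] by simp
    ultimately show "fixed_ideal X I" using i2 by blast
  qed
  have f1: "\<forall>\<F>. ZcF_filter X \<F> \<longrightarrow> fixed_filter \<F>"
    using fin_filter[OF True] by blast
  have u1: "\<forall>\<F>. ZcF_ultrafilter X \<F> \<longrightarrow> fixed_filter \<F>"
    using fin_filter[OF True] unfolding ZcF_ultrafilter_def by blast
  show ?thesis using True i1 i2 m1 m2 f1 u1 by simp
next
  case False
  define one where "one = (\<lambda>x. if x \<in> topspace X then 1 else (0::real))"
  have s2: "FS X \<subseteq> CcF_bdd X" by (rule FS_sub_bdd[OF assms])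
  have s1: "FS X \<subseteq> CcF X" using s2 bdd_sub by blast
  have no: "one \<notin> FS X" unfolding one_def by (rule one_notin_FS[OF False])
  have o1: "one \<in> CcF X" unfolding one_def by (rule CcF_const)
  have o2: "one \<in> CcF_bdd X" unfolding one_def by (rule bdd_const)
  have I1: "ideal (FS X) (fun_ring X (CcF X))" by (rule FS_ideal[OF ring_CcF s1])
  have I2: "ideal (FS X) (fun_ring X (CcF_bdd X))" by (rule FS_ideal[OF ring_bdd s2])
  have N1: "FS X \<noteq> CcF X" using no o1 by blast
  have N2: "FS X \<noteq> CcF_bdd X" using no o2 by blast
  have nf: "\<not> fixed_ideal X (FS X)" by (rule nonfixed) simp
  have i1: "\<not> (\<forall>I. ideal I (fun_ring X (CcF X)) \<and> I \<noteq> CcF X \<longrightarrow> fixed_ideal X I)"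
    using I1 N1 nf by blast
  have i2: "\<not> (\<forall>I. ideal I (fun_ring X (CcF_bdd X)) \<and> I \<noteq> CcF_bdd X \<longrightarrow> fixed_ideal X I)"
    using I2 N2 nf by blast
  obtain M1 where M1: "maximalideal M1 (fun_ring X (CcF X))" "FS X \<subseteq> M1"
    using krull[OF ring_CcF I1] N1 by auto
  obtain M2 where M2: "maximalideal M2 (fun_ring X (CcF_bdd X))" "FS X \<subseteq> M2"
    using krull[OF ring_bdd I2] N2 by auto
  have m1: "\<not> (\<forall>I. maximalideal I (fun_ring X (CcF X)) \<longrightarrow> fixed_ideal X I)"
    using M1 nonfixed[OF M1(2)] by blast
  have m2: "\<not> (\<forall>I. maximalideal I (fun_ring X (CcF_bdd X)) \<longrightarrow> fixed_ideal X I)"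
    using M2 nonfixed[OF M2(2)] by blast
  have F0: "ZcF_filter X (F0 X)" by (rule F0_filter[OF False])
  have "\<not> fixed_filter (F0 X)" unfolding fixed_filter_def using F0_Inter[OF assms subset_refl] by blast
  then have f1: "\<not> (\<forall>\<F>. ZcF_filter X \<F> \<longrightarrow> fixed_filter \<F>)" using F0 by blast
  obtain U where U: "ZcF_ultrafilter X U" "F0 X \<subseteq> U" using ultra_exists[OF F0] by blast
  have "\<not> fixed_filter U" unfolding fixed_filter_def using F0_Inter[OF assms U(2)] by blast
  then have u1: "\<not> (\<forall>\<F>. ZcF_ultrafilter X \<F> \<longrightarrow> fixed_filter \<F>)" using U(1) by blast
  show ?thesis using False i1 i2 m1 m2 f1 u1 by simp
qed


end
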